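(* Consider an unweighted ESP instance on $G=(V,E)$, $|V|=n$, root $r$. For each $k\in\{1,\dots,n\}$ let $T_k$ be the tree returned by Garg's 2-approximation algorithm for the rooted $k$-MST problem (a subtree of $G$ containing $r$ with exactly $k$ vertices whose length $\ell(T_k)=\sum_{e\in E(T_k)}\ell_e$ is at most twice the minimum length of such a tree), where $T_1=(\{r\},\emptyset)$. Let $H$ be the directed graph with vertex set $\{1,\dots,n\}$, arcs $(i,j)$ for all $i<j$, and arc costs $c_{i,j}=(n-i)\,\ell(T_j)$. Let $P=(n_0,n_1,\dots,n_l)$ with $n_0=1$, $n_l=n$ be a shortest $(1,n)$-path in $H$, and let $\sigma_{\mathrm{Alg}}$ be the expanding search pattern built in $l$ phases, where in phase $j\in\{1,\dots,l\}$ the edges of $T_{n_j}$ having fewer than two endpoints in $\bigcup_{i=0}^{j-1}V(T_{n_i})$ are appended in an order such that the set of explored vertices stays connected (edges both of whose endpoints are already explored being skipped). Then $L(\sigma_{\mathrm{Alg}})\le z$, where $z$ is the cost of a shortest $(1,n)$-path in $H$.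
   Context: Unweighted ESP: connected undirected graph $G=(V,E)$, root $r\in V$, edge lengths $\ell_e\in\mathbb{Z}_{>0}$, all vertex weights $w_v=1$. An expanding search pattern is a sequence of edges $\sigma=(e_1,\dots,e_m)$ with $r\in e_1$ such that $\{e_1,\dots,e_i\}$ forms a tree in $G$ for every $i$. For $v\ne r$ visited by $\sigma$, $k_v=\min\{i:v\in e_i\}$, $k_r=0$, latency $L_v(\sigma)=\sum_{i=1}^{k_v}\ell_{e_i}$; total latency $L(\sigma)=\sum_{v\in V}L_v(\sigma)$. The cost of a path in $H$ is the sum of its arc costs. *)

theory Defs
  imports Main
begin

definition adj :: "'a set set \<Rightarrow> 'a \<Rightarrow> 'a \<Rightarrow> bool" where
  "adj F u v \<longleftrightarrow> {u, v} \<in> F"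

definition simple_graph :: "'a set \<Rightarrow> 'a set set \<Rightarrow> bool" where
  "simple_graph V E \<longleftrightarrow> finite V \<and> (\<forall>e\<in>E. e \<subseteq> V \<and> card e = 2)"

definition graph_connected :: "'a set \<Rightarrow> 'a set set \<Rightarrow> bool" where
  "graph_connected V E \<longleftrightarrow> (\<forall>u\<in>V. \<forall>v\<in>V. (adj E)\<^sup>*\<^sup>* u v)"

definition is_tree :: "'a set \<Rightarrow> 'a set set \<Rightarrow> bool" where
  "is_tree W F \<longleftrightarrow> finite W \<and> (\<forall>e\<in>F. e \<subseteq> W) \<and> graph_connected W F \<and>
     (\<forall>e\<in>F. \<forall>u v. e = {u, v} \<longrightarrow> \<not> (adj (F - {e}))\<^sup>*\<^sup>* u v)"

definition rooted_subtree :: "'a set \<Rightarrow> 'a set set \<Rightarrow> 'a \<Rightarrow> 'a set \<Rightarrow> 'a set set \<Rightarrow> bool" where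
  "rooted_subtree V E r W F \<longleftrightarrow> W \<subseteq> V \<and> F \<subseteq> E \<and> r \<in> W \<and> is_tree W F"

definition tree_len :: "('a set \<Rightarrow> nat) \<Rightarrow> 'a set set \<Rightarrow> nat" where
  "tree_len len F = (\<Sum>e\<in>F. len e)"

definition expanding_search :: "'a set set \<Rightarrow> 'a \<Rightarrow> 'a set list \<Rightarrow> bool" where
  "expanding_search E r \<sigma> \<longleftrightarrow> set \<sigma> \<subseteq> E \<and> distinct \<sigma> \<and>
     (\<sigma> \<noteq> [] \<longrightarrow> r \<in> hd \<sigma>) \<and>
     (\<forall>i\<in>{1..length \<sigma>}. is_tree (\<Union> (set (take i \<sigma>))) (set (take i \<sigma>)))"

(* latency of vertex v: k_r = 0; otherwise k_v = min{i. v \<in> e_i} (1-based),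
   L_v = sum of lengths of e_1..e_{k_v} *)
definition vertex_latency :: "('a set \<Rightarrow> nat) \<Rightarrow> 'a \<Rightarrow> 'a set list \<Rightarrow> 'a \<Rightarrow> nat" where
  "vertex_latency len r \<sigma> v =
     (if v = r then 0
      else sum_list (map len (take (Suc (LEAST i. i < length \<sigma> \<and> v \<in> \<sigma> ! i)) \<sigma>)))"

definition total_latency :: "'a set \<Rightarrow> ('a set \<Rightarrow> nat) \<Rightarrow> 'a \<Rightarrow> 'a set list \<Rightarrow> nat" where
  "total_latency V len r \<sigma> = (\<Sum>v\<in>V. vertex_latency len r \<sigma> v)"

definition H_path :: "nat \<Rightarrow> nat list \<Rightarrow> bool" where
  "H_path n P \<longleftrightarrow> P \<noteq> [] \<and> hd P = 1 \<and> last P = n \<and> sorted_wrt (<) P"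

definition H_cost :: "nat \<Rightarrow> (nat \<Rightarrow> nat) \<Rightarrow> nat list \<Rightarrow> nat" where
  "H_cost n lenT P = (\<Sum>j\<in>{1..<length P}. (n - P ! (j - 1)) * lenT (P ! j))"

end

theory Submission
  imports Defs
begin
lemma lat_prefix:
  fixes len :: "'a set \<Rightarrow> nat"
  assumes "v \<noteq> r" "v \<in> \<Union> (set xs)"
  shows "vertex_latency len r (xs @ ys) v \<le> sum_list (map len xs)"
proof -
  obtain idx where idx: "idx < length xs" "v \<in> xs ! idx"
    using assms(2) by (metis UnionE in_set_conv_nth)
  let ?k = "LEAST i. i < length (xs @ ys) \<and> v \<in> (xs @ ys) ! i"
  have "idx < length (xs @ ys) \<and> v \<in> (xs @ ys) ! idx" using idx by (simp add: nth_append)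
  hence "?k \<le> idx" by (rule Least_le)
  hence tk: "take (Suc ?k) (xs @ ys) = take (Suc ?k) xs" using idx by simp
  have "sum_list (map len (take (Suc ?k) xs)) \<le> sum_list (map len xs)"
  proof -
    have "map len xs = map len (take (Suc ?k) xs) @ map len (drop (Suc ?k) xs)"
      by (metis append_take_drop_id map_append)
    then show ?thesis by (metis le_add1 sum_list_append)
  qed
  then show ?thesis using assms(1) tk unfolding vertex_latency_def by (simp only: if_False)
qed

lemma sum_concat_take:
  fixes len :: "'a set \<Rightarrow> nat"
  assumes "j \<le> length phases"
  shows "sum_list (map len (concat (take j phases))) = (\<Sum>i<j. sum_list (map len (phases ! i)))"
  using assms
proof (induction j)
  case 0 then show ?case by simp
next
  case (Suc j)
  then show ?case by (simp add: take_Suc_conv_app_nth)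
qed

lemma distinct_phase:
  assumes "distinct (concat phases)" "i < length phases"
  shows "distinct (phases ! i)"
proof -
  have "concat phases = concat (take i phases) @ phases ! i @ concat (drop (Suc i) phases)"
    using assms(2) by (metis concat.simps(2) concat_append id_take_nth_drop)
  then show ?thesis using assms(1) by (metis distinct_append)
qed

lemma tree_vertex_edge:
  assumes "rooted_subtree V E r W F" "w \<in> W" "w \<noteq> r"
  shows "\<exists>e\<in>F. w \<in> e"
proof -
  have "graph_connected W F" "r \<in> W" using assms(1) by (auto simp: rooted_subtree_def is_tree_def)
  hence "(adj F)\<^sup>*\<^sup>* r w" using assms(2) by (simp add: graph_connected_def)
  then show ?thesis
  proof (cases rule: rtranclp.cases)
    case rtrancl_refl then show ?thesis using assms(3) by simp
  next
    case (rtrancl_into_rtrancl u)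
    then show ?thesis by (auto simp: adj_def)
  qed
qed

theorem lemma2:
  fixes V :: "'a set" and E :: "'a set set" and r :: 'a and len :: "'a set \<Rightarrow> nat"
    and n :: nat and T :: "nat \<Rightarrow> 'a set \<times> 'a set set"
    and P :: "nat list" and phases :: "'a set list list" and \<sigma> :: "'a set list"
  assumes G: "simple_graph V E" and conn: "graph_connected V E" and root: "r \<in> V"
    and pos: "\<forall>e\<in>E. len e > 0"
    and n_def: "n = card V"
    and T_tree: "\<forall>k\<in>{1..n}. rooted_subtree V E r (fst (T k)) (snd (T k)) \<and> card (fst (T k)) = k"
    and T_approx: "\<forall>k\<in>{1..n}. \<forall>W F. rooted_subtree V E r W F \<and> card W = k \<longrightarrow>
                      tree_len len (snd (T k)) \<le> 2 * tree_len len F"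
    and T_1: "T 1 = ({r}, {})"
    and P_path: "H_path n P"
    and P_short: "\<forall>Q. H_path n Q \<longrightarrow> H_cost n (\<lambda>k. tree_len len (snd (T k))) P
                                    \<le> H_cost n (\<lambda>k. tree_len len (snd (T k))) Q"
    and phases_len: "length phases = length P - 1"
    and \<sigma>_def: "\<sigma> = concat phases"
    and \<sigma>_esp: "expanding_search E r \<sigma>"
    and phase_edges: "\<forall>j\<in>{1..<length P}. \<forall>e\<in>set (phases ! (j - 1)).
        e \<in> snd (T (P ! j)) \<and> \<not> e \<subseteq> (\<Union>i<j. fst (T (P ! i)))"
    and phase_skipped: "\<forall>j\<in>{1..<length P}. \<forall>e\<in>snd (T (P ! j)).
        \<not> e \<subseteq> (\<Union>i<j. fst (T (P ! i))) \<and> e \<notin> set (phases ! (j - 1)) \<longrightarrow>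
        e \<subseteq> insert r (\<Union> (set (concat (take j phases))))"
  shows "total_latency V len r \<sigma> \<le> H_cost n (\<lambda>k. tree_len len (snd (T k))) P"
proof -
  define c where "c i = tree_len len (snd (T (P ! i)))" for i
  define X where "X j = insert r (\<Union> (set (concat (take j phases))))" for j
  define m where "m = length P - 1"
  have finV: "finite V" using G by (simp add: simple_graph_def)
  have finE: "finite E"
  proof -
    have "E \<subseteq> Pow V" using G by (auto simp: simple_graph_def)
    then show ?thesis using finV by (meson finite_Pow_iff finite_subset)
  qed
  have Pne: "P \<noteq> []" and P0: "P ! 0 = 1" and Plast: "P ! m = n" and Psort: "sorted_wrt (<) P"
    using P_path by (auto simp: H_path_def m_def hd_conv_nth last_conv_nth)
  have lenP: "length P = Suc m" using Pne m_def by simp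
  have Pb: "1 \<le> P ! i \<and> P ! i \<le> n" if "i < length P" for i
  proof -
    have "P ! 0 \<le> P ! i"
      using Psort that by (cases "i = 0") (auto simp: sorted_wrt_iff_nth_less intro: less_imp_le)
    moreover have "P ! i \<le> P ! m"
      using Psort that lenP by (cases "i = m") (auto simp: sorted_wrt_iff_nth_less less_imp_le)
    ultimately show ?thesis using P0 Plast by simp
  qed
  have Tsub: "rooted_subtree V E r (fst (T (P ! i))) (snd (T (P ! i)))"
    and Tcard: "card (fst (T (P ! i))) = P ! i" if "i < length P" for i
    using T_tree Pb[OF that] by auto
  have TV: "fst (T (P ! i)) \<subseteq> V" if "i < length P" for i
    using Tsub[OF that] by (simp add: rooted_subtree_def)
  have finF: "finite (snd (T (P ! i)))" if "i < length P" for i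
    using Tsub[OF that] finE by (meson finite_subset rooted_subtree_def)
  have Xmono: "X a \<subseteq> X b" if "a \<le> b" for a b
  proof -
    have "take a phases = take a (take b phases)" using that by (simp add: min_def)
    hence "set (concat (take a phases)) \<subseteq> set (concat (take b phases))"
      by (metis append_take_drop_id concat_append set_append sup_ge1)
    then show ?thesis unfolding X_def by blast
  qed
  have cover: "fst (T (P ! j)) \<subseteq> X j" if "j < length P" for j
    using that
  proof (induction j rule: less_induct)
    case (less j)
    show ?case
    proof (cases "j = 0")
      case True then show ?thesis using P0 T_1 by (simp add: X_def)
    next
      case False
      show ?thesis
      proof
        fix w assume w: "w \<in> fst (T (P ! j))"
        show "w \<in> X j"
        proof (cases "w = r")
          case True then show ?thesis by (simp add: X_def)
        next
          case False
          then obtain e where e: "e \<in> snd (T (P ! j))" "w \<in> e"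
            using tree_vertex_edge[OF Tsub[OF less.prems] w] by blast
          have "e \<subseteq> X j"
          proof (cases "e \<subseteq> (\<Union>i<j. fst (T (P ! i)))")
            case True
            have "(\<Union>i<j. fst (T (P ! i))) \<subseteq> X j"
            proof (intro UN_least)
              fix i assume "i \<in> {..<j}"
              then have "i < j" by simp
              then show "fst (T (P ! i)) \<subseteq> X j"
                using less.IH[of i] less.prems Xmono[of i j] by auto
            qed
            then show ?thesis using True by blast
          next
            case nin: False
            have j1: "j \<in> {1..<length P}" using \<open>j \<noteq> 0\<close> less.prems by simp
            show ?thesis
            proof (cases "e \<in> set (phases ! (j - 1))")
              case True
              have "j - 1 < length phases" using j1 phases_len by auto
              hence "phases ! (j - 1) \<in> set (take j phases)"
                using \<open>j \<noteq> 0\<close> by (metis Suc_pred' bot_nat_0.not_eq_extremum in_set_conv_nth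
                    length_take lessI min_less_iff_conj nth_take)
              then show ?thesis using True unfolding X_def by auto
            next
              case False
              then show ?thesis using phase_skipped j1 e(1) nin unfolding X_def by blast
            qed
          qed
          then show ?thesis using e(2) by blast
        qed
      qed
    qed
  qed
  have VX: "V \<subseteq> X m"
  proof -
    have "fst (T (P ! m)) = V"
      using TV[of m] Tcard[of m] lenP Plast n_def finV by (simp add: card_subset_eq)
    then show ?thesis using cover[of m] lenP by simp
  qed
  have dist: "distinct (concat phases)" using \<sigma>_esp \<sigma>_def by (simp add: expanding_search_def)
  have phsum: "sum_list (map len (phases ! i)) \<le> c (Suc i)" if "i < length phases" for i
  proof -
    have "sum_list (map len (phases ! i)) = sum len (set (phases ! i))"
      using distinct_phase[OF dist that] by (simp add: sum_list_distinct_conv_sum_set)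
    also have "\<dots> \<le> sum len (snd (T (P ! Suc i)))"
    proof (rule sum_mono2)
      show "finite (snd (T (P ! Suc i)))" using finF[of "Suc i"] that phases_len by simp
      show "set (phases ! i) \<subseteq> snd (T (P ! Suc i))"
        using phase_edges that phases_len by (auto dest!: bspec[of _ _ "Suc i"])
    qed simp
    finally show ?thesis by (simp add: c_def tree_len_def)
  qed
  have vb: "vertex_latency len r \<sigma> v \<le> (\<Sum>i\<in>{1..j}. if v \<notin> X (i - 1) then c i else 0)"
    if "v \<noteq> r" "j \<le> m" "v \<in> X j" for v j
    using that
  proof (induction j)
    case 0 then show ?case by (simp add: X_def)
  next
    case (Suc j)
    show ?case
    proof (cases "v \<in> X j")
      case True
      then have "vertex_latency len r \<sigma> v \<le> (\<Sum>i\<in>{1..j}. if v \<notin> X (i - 1) then c i else 0)"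
        using Suc by simp
      then show ?thesis by simp
    next
      case False
      have "vertex_latency len r \<sigma> v \<le> sum_list (map len (concat (take (Suc j) phases)))"
      proof -
        have "\<sigma> = concat (take (Suc j) phases) @ concat (drop (Suc j) phases)"
          using \<sigma>_def by (metis append_take_drop_id concat_append)
        moreover have "v \<in> \<Union> (set (concat (take (Suc j) phases)))"
          using Suc.prems by (simp add: X_def)
        ultimately show ?thesis using lat_prefix[OF Suc.prems(1)] by metis
      qed
      also have "\<dots> = (\<Sum>i<Suc j. sum_list (map len (phases ! i)))"
        using Suc.prems phases_len m_def by (intro sum_concat_take) simp
      also have "\<dots> \<le> (\<Sum>i<Suc j. c (Suc i))"
        using Suc.prems phases_len m_def by (intro sum_mono phsum) simp
      also have "\<dots> = (\<Sum>i\<in>{1..Suc j}. c i)"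
        by (metis One_nat_def atLeastLessThanSuc_atLeastAtMost sum.shift_bounds_Suc_ivl lessThan_atLeast0)
      also have "\<dots> = (\<Sum>i\<in>{1..Suc j}. if v \<notin> X (i - 1) then c i else 0)"
      proof (rule sum.cong)
        fix i assume "i \<in> {1..Suc j}"
        then have "X (i - 1) \<subseteq> X j" by (intro Xmono) auto
        then show "c i = (if v \<notin> X (i - 1) then c i else 0)" using False by auto
      qed simp
      finally show ?thesis .
    qed
  qed
  have vb2: "vertex_latency len r \<sigma> v \<le> (\<Sum>i\<in>{1..<length P}. if v \<notin> fst (T (P ! (i - 1))) then c i else 0)"
    if "v \<in> V" for v
  proof (cases "v = r")
    case True then show ?thesis by (simp add: vertex_latency_def)
  next
    case False
    have "vertex_latency len r \<sigma> v \<le> (\<Sum>i\<in>{1..m}. if v \<notin> X (i - 1) then c i else 0)"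
      using vb[OF False order.refl] VX that by blast
    also have "\<dots> \<le> (\<Sum>i\<in>{1..m}. if v \<notin> fst (T (P ! (i - 1))) then c i else 0)"
    proof (rule sum_mono)
      fix i assume "i \<in> {1..m}"
      then have "i - 1 < length P" using lenP by auto
      then have "fst (T (P ! (i - 1))) \<subseteq> X (i - 1)" by (rule cover)
      then show "(if v \<notin> X (i - 1) then c i else 0) \<le> (if v \<notin> fst (T (P ! (i - 1))) then c i else 0)"
        by auto
    qed
    also have "{1..m} = {1..<length P}" using lenP by auto
    finally show ?thesis .
  qed
  have "total_latency V len r \<sigma> \<le> (\<Sum>v\<in>V. \<Sum>i\<in>{1..<length P}. if v \<notin> fst (T (P ! (i - 1))) then c i else 0)"
    unfolding total_latency_def by (intro sum_mono vb2)
  also have "\<dots> = (\<Sum>i\<in>{1..<length P}. \<Sum>v\<in>V. if v \<notin> fst (T (P ! (i - 1))) then c i else 0)"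
    by (rule sum.swap)
  also have "\<dots> = (\<Sum>i\<in>{1..<length P}. (n - P ! (i - 1)) * c i)"
  proof (rule sum.cong)
    fix i assume i: "i \<in> {1..<length P}"
    have il: "i - 1 < length P" using i by auto
    have "(\<Sum>v\<in>V. if v \<notin> fst (T (P ! (i - 1))) then c i else 0) = (\<Sum>v\<in>{v\<in>V. v \<notin> fst (T (P ! (i - 1)))}. c i)"
      using finV by (simp only: sum.inter_filter)
    also have "\<dots> = card (V - fst (T (P ! (i - 1)))) * c i"
      by (simp add: set_diff_eq)
    also have "card (V - fst (T (P ! (i - 1)))) = n - P ! (i - 1)"
      using card_Diff_subset[OF finite_subset[OF TV[OF il] finV] TV[OF il]] Tcard[OF il] n_def by simp
    finally show "(\<Sum>v\<in>V. if v \<notin> fst (T (P ! (i - 1))) then c i else 0) = (n - P ! (i - 1)) * c i" .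
  qed simp
  also have "\<dots> = H_cost n (\<lambda>k. tree_len len (snd (T k))) P"
    by (simp add: H_cost_def c_def)
  finally show ?thesis .
qed

end
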